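(* With $h$ as defined in the context, the function $x\mapsto h(x)/(x+1)$ is strictly decreasing on $(-1,\infty)$ and the function $x\mapsto h(x)(x+1)$ is strictly increasing on $(-1,\infty)$.
   Context: Let $u_n=(-1)^{s_2(n)}$, where $s_2(n)$ is the sum of the binary digits of the non-negative integer $n$ (Thue–Morse sequence with values $\pm1$). For real $x>-2$ define $h(x)=\prod_{n=1}^\infty\left(\frac{2n+x}{2n+1+x}\right)^{u_n}$ (limit of partial products; it converges). *)

theory Defs
  imports "HOL-Analysis.Analysis"
begin

fun s2 :: "nat \<Rightarrow> nat" where
  "s2 n = (if n = 0 then 0 else n mod 2 + s2 (n div 2))"

definition tm :: "nat \<Rightarrow> int" where
  "tm n = (-1) ^ s2 n"

definition h :: "real \<Rightarrow> real" where
  "h x = lim (\<lambda>N. \<Prod>n\<in>{1..N}. ((2 * real n + x) / (2 * real n + 1 + x)) powi tm n)"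

end

theory Submission
  imports Defs
begin

declare s2.simps[simp del]

definition LL :: "real \<Rightarrow> nat \<Rightarrow> real" where
  "LL x n = ln ((2 * real n + x) / (2 * real n + 1 + x))"

definition SS :: "real \<Rightarrow> nat \<Rightarrow> real" where
  "SS x N = (\<Sum>n\<in>{1..N}. real_of_int (tm n) * LL x n)"

lemma tm_even: "tm (2*k) = tm k"
  using s2.simps[of "2*k"] by (cases "k = 0") (auto simp: tm_def)

lemma tm_odd: "tm (2*k+1) = - tm k"
  using s2.simps[of "2*k+1"] by (auto simp: tm_def)

lemma tm_abs: "\<bar>real_of_int (tm n)\<bar> = 1"
  by (simp add: tm_def)

lemma LL_mono:
  assumes "x > -1" "1 \<le> n" "n \<le> m"
  shows "LL x n \<le> LL x m"
proof -
  have p: "2 * real n + x > 0" using assms by simp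
  have q: "2 * real m + x > 0" using assms by simp
  have "(2 * real n + x) / (2 * real n + 1 + x) \<le> (2 * real m + x) / (2 * real m + 1 + x)"
    using p q assms by (simp add: divide_simps) (simp add: algebra_simps)
  then show ?thesis unfolding LL_def using p q by (simp)
qed

lemma LL_lim:
  assumes "x > -1"
  shows "LL x \<longlonglongrightarrow> 0"
proof -
  have i0: "(\<lambda>n::nat. 1 / (2 * real n + 1 + x)) \<longlonglongrightarrow> 0"
  proof (rule tendsto_0_le[OF lim_inverse_n, of _ 1])
    show "eventually (\<lambda>n. norm (1 / (2 * real n + 1 + x)) \<le> norm (inverse (real n)) * 1) sequentially"
      unfolding eventually_sequentially
    proof (intro exI[of _ 1] allI impI)
      fix n :: nat assume "1 \<le> n"
      then have "real n \<le> 2 * real n + 1 + x" "real n > 0" using assms by auto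
      then show "norm (1 / (2 * real n + 1 + x)) \<le> norm (inverse (real n)) * 1"
        using assms by (simp add: divide_simps)
    qed
  qed
  have eq: "(2 * real n + x) / (2 * real n + 1 + x) = 1 - 1 / (2 * real n + 1 + x)" for n
    using assms by (simp add: divide_simps)
  have "(\<lambda>n::nat. (2 * real n + x) / (2 * real n + 1 + x)) \<longlonglongrightarrow> 1 - 0"
    unfolding eq by (intro tendsto_diff tendsto_const i0)
  from tendsto_ln[OF this] show ?thesis unfolding LL_def by simp
qed

lemma SS_odd:
  "SS x (2*K+1) = SS x 1 + (\<Sum>k<K. real_of_int (tm (k+1)) * (LL x (2*k+2) - LL x (2*k+3)))"
proof (induction K)
  case 0 then show ?case by simp
next
  case (Suc K)
  have "SS x (2*Suc K+1) = SS x (2*K+1) + real_of_int (tm (2*K+2)) * LL x (2*K+2)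
          + real_of_int (tm (2*K+3)) * LL x (2*K+3)"
    unfolding SS_def by (simp add: sum.cl_ivl_Suc numeral_eq_Suc)
  moreover have "tm (2*K+2) = tm (K+1)" using tm_even[of "K+1"] by (simp add: algebra_simps)
  moreover have "tm (2*K+3) = - tm (K+1)"
  proof -
    have e: "2*K+3 = 2*(K+1)+1" by simp
    show ?thesis unfolding e by (rule tm_odd)
  qed
  ultimately show ?case using Suc by (simp add: algebra_simps)
qed

lemma SS_conv:
  assumes "x > -1"
  shows "convergent (SS x)"
proof -
  define g where "g k = real_of_int (tm (k+1)) * (LL x (2*k+2) - LL x (2*k+3))" for k
  define G where "G k = LL x (2*k+2)" for k
  have sm: "strict_mono (\<lambda>k::nat. 2*k+2)" by (auto simp: strict_mono_def)
  have G0: "G \<longlonglongrightarrow> 0"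
    using filterlim_compose[OF LL_lim[OF assms] filterlim_subseq[OF sm]]
    by (simp add: G_def[abs_def] o_def)
  have sf: "summable (\<lambda>k. G (Suc k) - G k)" using telescope_summable[OF G0] .
  have "summable g"
  proof (rule summable_comparison_test'[OF sf])
    fix k :: nat
    have a: "LL x (2*k+2) \<le> LL x (2*k+3)" by (rule LL_mono[OF assms]) auto
    have b: "LL x (2*k+3) \<le> LL x (2*k+4)" by (rule LL_mono[OF assms]) auto
    have "norm (g k) = \<bar>LL x (2*k+2) - LL x (2*k+3)\<bar>"
      by (simp add: g_def abs_mult tm_abs)
    also have "\<dots> \<le> LL x (2*k+4) - LL x (2*k+2)" using a b by linarith
    also have "LL x (2*k+4) - LL x (2*k+2) = G (Suc k) - G k"
    proof -
      have e: "2*Suc k+2 = 2*k+4" by simp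
      show ?thesis by (simp only: G_def e)
    qed
    finally show "norm (g k) \<le> G (Suc k) - G k" .
  qed
  then have T: "(\<lambda>K. SS x (2*K+1)) \<longlonglongrightarrow> SS x 1 + suminf g"
    unfolding SS_odd g_def[symmetric]
    by (intro tendsto_add tendsto_const summable_LIMSEQ)
  have d2: "filterlim (\<lambda>N::nat. N div 2) sequentially sequentially"
    unfolding filterlim_at_top
  proof
    fix Z :: nat
    show "eventually (\<lambda>N. Z \<le> N div 2) sequentially"
      unfolding eventually_sequentially by (rule exI[of _ "2*Z"]) auto
  qed
  have T2: "(\<lambda>N. SS x (2*(N div 2)+1)) \<longlonglongrightarrow> SS x 1 + suminf g"
    using filterlim_compose[OF T d2] by (simp add: o_def)
  have sm1: "strict_mono (\<lambda>k::nat. k+1)" by (auto simp: strict_mono_def)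
  have L1: "(\<lambda>N. LL x (N+1)) \<longlonglongrightarrow> 0"
    using filterlim_compose[OF LL_lim[OF assms] filterlim_subseq[OF sm1]] by (simp add: o_def)
  define e where "e N = (if even N then real_of_int (tm (N+1)) * LL x (N+1) else 0)" for N
  have e0: "e \<longlonglongrightarrow> 0"
  proof (rule tendsto_0_le[OF L1, of _ 1])
    show "eventually (\<lambda>N. norm (e N) \<le> norm (LL x (N+1)) * 1) sequentially"
      by (auto simp: e_def abs_mult tm_abs)
  qed
  have eq: "SS x N = SS x (2*(N div 2)+1) - e N" for N
  proof (cases "even N")
    case True
    then obtain K where K: "N = 2*K" by auto
    have "SS x (2*K+1) = SS x (2*K) + real_of_int (tm (2*K+1)) * LL x (2*K+1)"
      unfolding SS_def by (simp add: sum.cl_ivl_Suc)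
    then show ?thesis using K by (simp add: e_def)
  next
    case False
    then obtain K where K: "N = 2*K+1" using oddE by blast
    then show ?thesis by (simp add: e_def)
  qed
  have lim1: "(\<lambda>N. SS x (2*(N div 2)+1) - e N) \<longlonglongrightarrow> SS x 1 + suminf g - 0"
    by (intro tendsto_diff T2 e0)
  have "(\<lambda>N. SS x (2*(N div 2)+1) - e N) = SS x"
    by (rule ext, rule eq[symmetric])
  then have "SS x \<longlonglongrightarrow> SS x 1 + suminf g - 0" using lim1 by simp
  then show ?thesis by (auto simp: convergent_def)
qed

lemma h_exp:
  assumes "x > -1"
  shows "h x = exp (lim (SS x))"
proof -
  have eq: "(\<Prod>n\<in>{1..N}. ((2 * real n + x) / (2 * real n + 1 + x)) powi tm n) = exp (SS x N)" for N
  proof -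
    have "(\<Prod>n\<in>{1..N}. ((2 * real n + x) / (2 * real n + 1 + x)) powi tm n)
        = (\<Prod>n\<in>{1..N}. exp (real_of_int (tm n) * LL x n))"
    proof (rule prod.cong[OF refl])
      fix n assume "n \<in> {1..N}"
      then have pos: "(2 * real n + x) / (2 * real n + 1 + x) > 0" using assms by auto
      have "((2 * real n + x) / (2 * real n + 1 + x)) powi tm n
          = exp (ln ((2 * real n + x) / (2 * real n + 1 + x))) powi tm n"
        using pos by simp
      also have "\<dots> = exp (real_of_int (tm n) * LL x n)"
        by (simp add: exp_power_int LL_def)
      finally show "((2 * real n + x) / (2 * real n + 1 + x)) powi tm n = exp (real_of_int (tm n) * LL x n)" .
    qed
    also have "\<dots> = exp (SS x N)" unfolding SS_def by (simp add: exp_sum)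
    finally show ?thesis .
  qed
  have "(\<lambda>N. exp (SS x N)) \<longlonglongrightarrow> exp (lim (SS x))"
    using SS_conv[OF assms] by (intro tendsto_exp) (simp add: convergent_LIMSEQ_iff)
  then show ?thesis unfolding h_def eq by (rule limI)
qed

lemma key_ineq:
  fixes p q :: real
  assumes "1 < p" "p \<le> q"
  shows "2 * (ln (q/(q+1)) - ln (p/(p+1))) \<le> (ln (q-1) - ln (p-1)) - (ln (q+1) - ln (p+1))"
proof -
  have "q^2 * (p^2 - 1) \<le> p^2 * (q^2 - 1)"
  proof -
    have "p^2 \<le> q^2" using assms by (intro power_mono) auto
    then show ?thesis by (simp add: algebra_simps)
  qed
  moreover have "0 < q^2 * (p^2 - 1)"
  proof -
    have "1 < p^2" using assms by (metis less_1_mult power2_eq_square)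
    then show ?thesis using assms by simp
  qed
  ultimately have "ln (q^2 * (p^2 - 1)) \<le> ln (p^2 * (q^2 - 1))" by simp
  moreover have "q^2 * (p^2 - 1) = q * q * ((p-1) * (p+1))" by (simp add: algebra_simps power2_eq_square)
  moreover have "p^2 * (q^2 - 1) = p * p * ((q-1) * (q+1))" by (simp add: algebra_simps power2_eq_square)
  ultimately have "ln q + ln q + (ln (p-1) + ln (p+1)) \<le> ln p + ln p + (ln (q-1) + ln (q+1))"
    using assms by (simp add: ln_mult)
  then show ?thesis using assms by (simp add: ln_div)
qed

lemma d_nonneg:
  fixes p q :: real
  assumes "0 < p" "p \<le> q"
  shows "ln (p/(p+1)) \<le> ln (q/(q+1))"
proof -
  have "p*(q+1) \<le> q*(p+1)" using assms by (simp add: algebra_simps)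
  then have "p/(p+1) \<le> q/(q+1)" using assms by (simp add: divide_simps)
  then show ?thesis using assms by simp
qed

lemma sum_d:
  assumes "x > -1" "x \<le> y"
  shows "(\<Sum>n\<in>{1..N}. LL y n - LL x n) \<le>
     ((ln (1+y) - ln (1+x)) - (ln (2*real N + 1 + y) - ln (2*real N + 1 + x))) / 2"
proof (induction N)
  case 0 then show ?case by simp
next
  case (Suc N)
  define p where "p = 2 * real (Suc N) + x"
  define q where "q = 2 * real (Suc N) + y"
  have p1: "1 < p" "p \<le> q" using assms by (auto simp: p_def q_def)
  have "2 * (LL y (Suc N) - LL x (Suc N)) \<le> (ln (q-1) - ln (p-1)) - (ln (q+1) - ln (p+1))"
    using key_ineq[OF p1] unfolding LL_def p_def q_def by (simp add: add.assoc)
  moreover have "q - 1 = 2*real N + 1 + y" "p - 1 = 2*real N + 1 + x"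
    "q + 1 = 2*real (Suc N) + 1 + y" "p + 1 = 2*real (Suc N) + 1 + x"
    by (simp_all add: p_def q_def)
  ultimately show ?case using Suc by (simp add: sum.cl_ivl_Suc)
qed

lemma SS_diff:
  assumes "x > -1" "x \<le> y"
  shows "\<bar>SS y N - SS x N\<bar> \<le> (ln (1+y) - ln (1+x)) / 2"
proof -
  have "SS y N - SS x N = (\<Sum>n\<in>{1..N}. real_of_int (tm n) * (LL y n - LL x n))"
    unfolding SS_def by (simp add: sum_subtractf algebra_simps)
  also have "\<bar>\<dots>\<bar> \<le> (\<Sum>n\<in>{1..N}. \<bar>real_of_int (tm n) * (LL y n - LL x n)\<bar>)"
    by (rule sum_abs)
  also have "\<dots> = (\<Sum>n\<in>{1..N}. LL y n - LL x n)"
  proof (rule sum.cong[OF refl])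
    fix n assume "n \<in> {1..N}"
    then have "ln ((2*real n + x)/((2*real n + x)+1)) \<le> ln ((2*real n + y)/((2*real n + y)+1))"
      using assms by (intro d_nonneg) auto
    then have "LL x n \<le> LL y n" by (simp add: LL_def ac_simps)
    then show "\<bar>real_of_int (tm n) * (LL y n - LL x n)\<bar> = LL y n - LL x n"
      by (simp add: abs_mult tm_abs)
  qed
  also have "\<dots> \<le> ((ln (1+y) - ln (1+x)) - (ln (2*real N + 1 + y) - ln (2*real N + 1 + x))) / 2"
    by (rule sum_d[OF assms])
  also have "\<dots> \<le> (ln (1+y) - ln (1+x)) / 2"
    using assms by simp
  finally show ?thesis .
qed

lemma main_ineq:
  assumes "x > -1" "x < y"
  shows "\<bar>lim (SS y) - lim (SS x)\<bar> \<le> (ln (1+y) - ln (1+x)) / 2"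
proof -
  have y: "y > -1" using assms by simp
  have "(\<lambda>N. \<bar>SS y N - SS x N\<bar>) \<longlonglongrightarrow> \<bar>lim (SS y) - lim (SS x)\<bar>"
    using SS_conv[OF assms(1)] SS_conv[OF y]
    by (intro tendsto_rabs tendsto_diff) (simp_all add: convergent_LIMSEQ_iff)
  then show ?thesis
    by (rule LIMSEQ_le_const2) (use SS_diff[OF assms(1)] assms in auto)
qed

theorem theorem1:
  shows "strict_antimono_on {-1<..} (\<lambda>x. h x / (x + 1)) \<and>
         strict_mono_on {-1<..} (\<lambda>x. h x * (x + 1))"
proof -
  have both: "h y / (y+1) < h x / (x+1) \<and> h x * (x+1) < h y * (y+1)"
    if xy: "x > -1" "x < y" for x y
  proof -
    have y: "y > -1" using xy by simp
    define D where "D = ln (1+y) - ln (1+x)"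
    have D: "D > 0" using xy by (simp add: D_def)
    have eD: "exp D = (y+1)/(x+1)" using xy by (simp add: D_def exp_diff add.commute)
    have M: "\<bar>lim (SS y) - lim (SS x)\<bar> \<le> D/2" using main_ineq[OF xy] by (simp add: D_def)
    have hx: "h x = exp (lim (SS x))" and hy: "h y = exp (lim (SS y))"
      using h_exp xy y by auto
    have "lim (SS y) - lim (SS x) < D" using M D by linarith
    then have "exp (lim (SS y) - lim (SS x)) < exp D" by simp
    then have "h y / h x < (y+1)/(x+1)" using eD by (simp add: hx hy exp_diff)
    then have 1: "h y / (y+1) < h x / (x+1)" using xy y by (simp add: hx hy divide_simps) (simp add: mult.commute)
    have "- D < lim (SS y) - lim (SS x)" using M D by linarith
    then have "exp (- D) < exp (lim (SS y) - lim (SS x))" by simp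
    then have "(x+1)/(y+1) < h y / h x" using eD by (simp add: hx hy exp_diff exp_minus inverse_eq_divide)
    then have 2: "h x * (x+1) < h y * (y+1)" using xy y by (simp add: hx hy divide_simps) (simp add: mult.commute)
    show ?thesis using 1 2 by simp
  qed
  show ?thesis
    by (auto simp: monotone_on_def both)
qed

end
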